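(* Let $\Gamma$ be a connected finite simple graph on $N\ge3$ vertices with $\varepsilon>\frac12$. Then: (1) if $u\ne w$ are vertices with $\deg u=\deg w=1$, there is no vertex $v$ with $u\sim v\sim w$; (2) there are no three distinct vertices $u\sim v\sim w$ with $\deg u,\deg v,\deg w\in\{1,2\}$.
   Context: For a finite simple graph $\Gamma=(V,E)$ without isolated vertices, $\deg v$ is the number of neighbours of $v$ and $\mathcal N(v)=\{w\in V: w\sim v\}$. The normalized Laplacian acts on functions $f:V\to\mathbb R$ by $\Delta f(v)=f(v)-\frac{1}{\deg v}\sum_{w\sim v}f(w)$; its eigenvalues are $0=\lambda_1\le\lambda_2\le\dots\le\lambda_N$, and $\varepsilon:=\min_i|1-\lambda_i|$. *)

theory Defs
  imports Main "HOL-Analysis.Analysis"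
begin

definition simple_graph :: "'a set \<Rightarrow> ('a \<Rightarrow> 'a \<Rightarrow> bool) \<Rightarrow> bool" where
  "simple_graph V E \<longleftrightarrow> finite V \<and> (\<forall>u v. E u v \<longrightarrow> u \<in> V \<and> v \<in> V)
     \<and> (\<forall>u v. E u v \<longrightarrow> E v u) \<and> (\<forall>v. \<not> E v v)"

definition connected_graph :: "'a set \<Rightarrow> ('a \<Rightarrow> 'a \<Rightarrow> bool) \<Rightarrow> bool" where
  "connected_graph V E \<longleftrightarrow> (\<forall>u\<in>V. \<forall>v\<in>V. E\<^sup>*\<^sup>* u v)"

definition neighbours :: "'a set \<Rightarrow> ('a \<Rightarrow> 'a \<Rightarrow> bool) \<Rightarrow> 'a \<Rightarrow> 'a set" where
  "neighbours V E v = {w \<in> V. E w v}"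

definition deg :: "'a set \<Rightarrow> ('a \<Rightarrow> 'a \<Rightarrow> bool) \<Rightarrow> 'a \<Rightarrow> nat" where
  "deg V E v = card (neighbours V E v)"

definition norm_laplacian :: "'a set \<Rightarrow> ('a \<Rightarrow> 'a \<Rightarrow> bool) \<Rightarrow> ('a \<Rightarrow> real) \<Rightarrow> 'a \<Rightarrow> real" where
  "norm_laplacian V E f v = f v - (\<Sum>w\<in>neighbours V E v. f w) / real (deg V E v)"

definition laplacian_eigenvalue :: "'a set \<Rightarrow> ('a \<Rightarrow> 'a \<Rightarrow> bool) \<Rightarrow> real \<Rightarrow> bool" where
  "laplacian_eigenvalue V E mu \<longleftrightarrow>
     (\<exists>f :: 'a \<Rightarrow> real. (\<exists>v\<in>V. f v \<noteq> 0) \<and> (\<forall>v\<in>V. norm_laplacian V E f v = mu * f v))"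

definition spectral_eps :: "'a set \<Rightarrow> ('a \<Rightarrow> 'a \<Rightarrow> bool) \<Rightarrow> real" where
  "spectral_eps V E = Min {\<bar>1 - mu\<bar> | mu. laplacian_eigenvalue V E mu}"

end

theory Submission
  imports Defs "HOL-Library.Function_Algebras"
begin

definition dg :: "'a set \<Rightarrow> ('a \<Rightarrow> 'a \<Rightarrow> bool) \<Rightarrow> 'a \<Rightarrow> real" where
  "dg V E v = real (deg V E v)"
definition Asum :: "'a set \<Rightarrow> ('a \<Rightarrow> 'a \<Rightarrow> bool) \<Rightarrow> ('a \<Rightarrow> real) \<Rightarrow> 'a \<Rightarrow> real" where
  "Asum V E f x = (\<Sum>y\<in>neighbours V E x. f y)"
definition ip :: "'a set \<Rightarrow> ('a \<Rightarrow> 'a \<Rightarrow> bool) \<Rightarrow> ('a \<Rightarrow> real) \<Rightarrow> ('a \<Rightarrow> real) \<Rightarrow> real" where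
  "ip V E f g = (\<Sum>v\<in>V. dg V E v * f v * g v)"
definition Nq :: "'a set \<Rightarrow> ('a \<Rightarrow> 'a \<Rightarrow> bool) \<Rightarrow> ('a \<Rightarrow> real) \<Rightarrow> real" where
  "Nq V E f = (\<Sum>x\<in>V. (Asum V E f x)^2 / dg V E x)"
definition Top :: "'a set \<Rightarrow> ('a \<Rightarrow> 'a \<Rightarrow> bool) \<Rightarrow> ('a \<Rightarrow> real) \<Rightarrow> 'a \<Rightarrow> real" where
  "Top V E f x = Asum V E f x / dg V E x"

lemma nb_sub: "neighbours V E x \<subseteq> V" by (auto simp: neighbours_def)

lemma nb_fin: "finite V \<Longrightarrow> finite (neighbours V E x)"
  using nb_sub finite_subset by metis

lemma Asum_alt: "finite V \<Longrightarrow> Asum V E f x = (\<Sum>y\<in>V. if E y x then f y else 0)"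
  unfolding Asum_def neighbours_def by (simp add: sum.inter_filter)

lemma Asum_lin: "Asum V E (\<lambda>y. a * g y + b * h y) x = a * Asum V E g x + b * Asum V E h x"
  unfolding Asum_def by (simp add: sum.distrib sum_distrib_left)

lemma Asum_cong: "(\<And>y. y \<in> V \<Longrightarrow> f y = g y) \<Longrightarrow> Asum V E f x = Asum V E g x"
  unfolding Asum_def neighbours_def by (rule sum.cong) auto

lemma selfadj:
  assumes "simple_graph V E"
  shows "(\<Sum>x\<in>V. Asum V E f x * g x) = (\<Sum>x\<in>V. f x * Asum V E g x)"
proof -
  have fin: "finite V" and sym: "\<And>u v. E u v \<Longrightarrow> E v u" using assms by (auto simp: simple_graph_def)
  have "(\<Sum>x\<in>V. Asum V E f x * g x) = (\<Sum>x\<in>V. \<Sum>y\<in>V. if E y x then f y * g x else 0)"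
    unfolding Asum_alt[OF fin] sum_distrib_right by (intro sum.cong refl) auto
  also have "\<dots> = (\<Sum>y\<in>V. \<Sum>x\<in>V. if E y x then f y * g x else 0)"
    by (rule sum.swap)
  also have "\<dots> = (\<Sum>y\<in>V. \<Sum>x\<in>V. if E x y then f y * g x else 0)"
    by (intro sum.cong refl) (metis sym)
  also have "\<dots> = (\<Sum>x\<in>V. f x * Asum V E g x)"
    unfolding Asum_alt[OF fin] sum_distrib_left by (intro sum.cong refl) auto
  finally show ?thesis .
qed

lemma quad_zero:
  fixes a b :: real
  assumes "\<And>t. a * t + b * t^2 \<ge> 0"
  shows "a = 0"
proof (rule ccontr)
  assume a: "a \<noteq> 0"
  define B where "B = \<bar>b\<bar> + 1"
  have B: "B > 0" "b \<le> B" "B \<ge> 1" unfolding B_def by auto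
  define t where "t = - a / (2 * B)"
  have "a * t + b * t^2 \<le> a * t + B * t^2"
    using B by (intro add_left_mono mult_right_mono) auto
  also have "\<dots> = - (a * a) / (4 * B)"
    unfolding t_def using B by (simp add: field_simps power2_eq_square)
  also have "\<dots> < 0"
  proof -
    have "0 < a * a" using a by (metis not_real_square_gt_zero)
    then show ?thesis using B by (simp add: divide_pos_pos)
  qed
  finally show False using assms[of t] by linarith
qed

definition Bf :: "'a set \<Rightarrow> ('a \<Rightarrow> 'a \<Rightarrow> bool) \<Rightarrow> ('a \<Rightarrow> real) \<Rightarrow> ('a \<Rightarrow> real) \<Rightarrow> real" where
  "Bf V E g h = (\<Sum>x\<in>V. Asum V E g x * Asum V E h x / dg V E x)"

lemma Asum_scale: "Asum V E (\<lambda>y. a * g y) x = a * Asum V E g x"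
  unfolding Asum_def by (simp add: sum_distrib_left)

lemma Nq_scale: "Nq V E (\<lambda>y. a * g y) = a^2 * Nq V E g"
  unfolding Nq_def Asum_scale by (simp add: sum_distrib_left power_mult_distrib)

lemma ip_scale: "ip V E (\<lambda>y. a * g y) (\<lambda>y. a * g y) = a^2 * ip V E g g"
  unfolding ip_def by (simp add: sum_distrib_left power2_eq_square algebra_simps)

lemma Nq_cong: "(\<And>y. y \<in> V \<Longrightarrow> f y = g y) \<Longrightarrow> Nq V E f = Nq V E g"
  unfolding Nq_def using Asum_cong[of V f g E] by simp

lemma ip_cong: "(\<And>y. y \<in> V \<Longrightarrow> f y = g y) \<Longrightarrow> ip V E f f = ip V E g g"
  unfolding ip_def by simp

lemma Nq_add: "Nq V E (\<lambda>y. g y + t * h y) = Nq V E g + 2 * t * Bf V E g h + t^2 * Nq V E h"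
proof -
  have "Asum V E (\<lambda>y. g y + t * h y) x = Asum V E g x + t * Asum V E h x" for x
    using Asum_lin[of V E 1 g t h x] by simp
  then show ?thesis unfolding Nq_def Bf_def
    by (simp add: sum.distrib sum_distrib_left power2_sum add_divide_distrib
        power_mult_distrib algebra_simps)
qed

lemma ip_add: "ip V E (\<lambda>y. g y + t * h y) (\<lambda>y. g y + t * h y)
   = ip V E g g + 2 * t * ip V E g h + t^2 * ip V E h h"
  unfolding ip_def by (simp add: sum.distrib sum_distrib_left power2_eq_square algebra_simps)

lemma dg_pos: "\<forall>v\<in>V. deg V E v \<ge> 1 \<Longrightarrow> v \<in> V \<Longrightarrow> dg V E v \<ge> 1"
  unfolding dg_def by auto

lemma Nq_nonneg: "\<forall>v\<in>V. deg V E v \<ge> 1 \<Longrightarrow> Nq V E f \<ge> 0"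
  unfolding Nq_def using dg_pos by (intro sum_nonneg) (force intro: divide_nonneg_pos)

lemma ip_nonneg: "\<forall>v\<in>V. deg V E v \<ge> 1 \<Longrightarrow> ip V E f f \<ge> 0"
  unfolding ip_def using dg_pos
proof (intro sum_nonneg)
  fix v assume "\<forall>v\<in>V. deg V E v \<ge> 1" "v \<in> V"
  then have "dg V E v \<ge> 0" using dg_pos[of V E v] by linarith
  then show "0 \<le> dg V E v * f v * f v" by (simp add: mult.assoc)
qed

lemma normalize:
  assumes G: "simple_graph V E" and pos: "\<forall>v\<in>V. deg V E v \<ge> 1" and p: "ip V E f f > 0"
  defines "\<psi> \<equiv> restrict (\<lambda>x. f x / sqrt (ip V E f f)) V"
  shows "\<psi> \<in> PiE V (\<lambda>_. {-1..1})" "ip V E \<psi> \<psi> = 1" "Nq V E \<psi> = Nq V E f / ip V E f f"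
proof -
  let ?r = "sqrt (ip V E f f)"
  have r2: "(1/?r)^2 = 1 / ip V E f f" using p by (simp add: power_divide)
  have eqV: "\<And>y. y \<in> V \<Longrightarrow> \<psi> y = (1/?r) * f y" unfolding \<psi>_def by simp
  have ip1: "ip V E \<psi> \<psi> = 1"
    using ip_cong[of V \<psi> "\<lambda>y. (1/?r) * f y" E] eqV ip_scale[of V E "1/?r" f] p r2
    by simp
  show "ip V E \<psi> \<psi> = 1" by (rule ip1)
  show "Nq V E \<psi> = Nq V E f / ip V E f f"
    using Nq_cong[of V \<psi> "\<lambda>y. (1/?r) * f y" E] eqV Nq_scale[of V E "1/?r" f] r2 by simp
  have fin: "finite V" using G by (simp add: simple_graph_def)
  show "\<psi> \<in> PiE V (\<lambda>_. {-1..1})"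
  proof (rule PiE_I)
    fix x assume x: "x \<in> V"
    have nn: "\<forall>y\<in>V. 0 \<le> dg V E y * \<psi> y * \<psi> y"
    proof
      fix y assume "y \<in> V"
      then have "dg V E y \<ge> 0" using dg_pos[OF pos, of y] by linarith
      then show "0 \<le> dg V E y * \<psi> y * \<psi> y" by (simp add: mult.assoc)
    qed
    have "dg V E x * \<psi> x * \<psi> x \<le> ip V E \<psi> \<psi>"
      unfolding ip_def using x fin nn by (intro member_le_sum) auto
    then have a: "dg V E x * (\<psi> x * \<psi> x) \<le> 1" using ip1 by (simp add: mult.assoc)
    have "\<psi> x * \<psi> x \<le> dg V E x * (\<psi> x * \<psi> x)"
      using dg_pos[OF pos x] by (simp add: mult_le_cancel_right1)
    then have "\<psi> x ^ 2 \<le> 1" using a by (simp add: power2_eq_square)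
    then have "\<bar>\<psi> x\<bar> \<le> 1" using abs_square_le_1 by blast
    then show "\<psi> x \<in> {-1..1}" by auto
  next
    fix x assume "x \<notin> V" then show "\<psi> x = undefined" unfolding \<psi>_def by simp
  qed
qed

lemma exists_min:
  assumes G: "simple_graph V E" and pos: "\<forall>v\<in>V. deg V E v \<ge> 1" and p: "ip V E f0 f0 > 0"
  shows "\<exists>g. ip V E g g = 1 \<and> (\<forall>\<phi>. Nq V E \<phi> \<ge> Nq V E g * ip V E \<phi> \<phi>)"
proof -
  have fin: "finite V" using G by (simp add: simple_graph_def)
  define X where "X = product_topology (\<lambda>_. euclideanreal) V"
  have cproj: "\<And>v. v \<in> V \<Longrightarrow> continuous_map X euclideanreal (\<lambda>f. f v)"
    unfolding X_def using continuous_map_product_projection[of _ V "\<lambda>_. euclideanreal"] by simp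
  have cip: "continuous_map X euclideanreal (\<lambda>f. ip V E f f)"
    unfolding ip_def by (intro continuous_intros cproj fin)
  have cA: "continuous_map X euclideanreal (\<lambda>f. Asum V E f x)" for x
    unfolding Asum_def using nb_sub[of V E x]
    by (intro continuous_intros cproj nb_fin fin) auto
  have cNq: "continuous_map X euclideanreal (Nq V E)"
  proof -
    have "Nq V E = (\<lambda>f. \<Sum>x\<in>V. (Asum V E f x)^2 * inverse (dg V E x))"
      by (auto simp: Nq_def divide_inverse fun_eq_iff)
    moreover have "continuous_map X euclideanreal (\<lambda>f. \<Sum>x\<in>V. (Asum V E f x)^2 * inverse (dg V E x))"
      by (intro continuous_intros cA fin)
    ultimately show ?thesis by simp
  qed
  define K where "K = {f \<in> topspace X. ip V E f f \<in> {1}} \<inter> PiE V (\<lambda>_. {-1..1::real})"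
  have cl: "closedin X {f \<in> topspace X. ip V E f f \<in> {1}}"
    by (rule closedin_continuous_map_preimage[OF cip]) simp
  have cpi: "compactin X (PiE V (\<lambda>_. {-1..1::real}))"
    unfolding X_def by (simp add: compactin_PiE)
  have cK: "compactin X K" unfolding K_def by (rule closed_Int_compactin[OF cl cpi])
  have cimg: "compact (Nq V E ` K)"
    using image_compactin[OF cK cNq] by simp
  have topX: "topspace X = PiE V (\<lambda>_. UNIV)" unfolding X_def by simp
  have inK: "restrict (\<lambda>x. f x / sqrt (ip V E f f)) V \<in> K" if "ip V E f f > 0" for f
    using normalize[OF G pos that] unfolding K_def topX by auto
  have ne: "Nq V E ` K \<noteq> {}" using inK[OF p] by blast
  obtain s where s: "s \<in> Nq V E ` K" "\<And>t. t \<in> Nq V E ` K \<Longrightarrow> s \<le> t"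
    using compact_attains_inf[OF cimg ne] by blast
  then obtain g where g: "g \<in> K" "s = Nq V E g" by blast
  have ipg: "ip V E g g = 1" using g unfolding K_def by simp
  have "Nq V E \<phi> \<ge> Nq V E g * ip V E \<phi> \<phi>" for \<phi>
  proof (cases "ip V E \<phi> \<phi> > 0")
    case True
    have "Nq V E g \<le> Nq V E (restrict (\<lambda>x. \<phi> x / sqrt (ip V E \<phi> \<phi>)) V)"
      using s(2) g(2) inK[OF True] by blast
    also have "\<dots> = Nq V E \<phi> / ip V E \<phi> \<phi>" using normalize[OF G pos True] by simp
    finally show ?thesis using True by (simp add: pos_le_divide_eq)
  next
    case False
    then have "ip V E \<phi> \<phi> = 0" using ip_nonneg[OF pos, of \<phi>] by linarith
    then show ?thesis using Nq_nonneg[OF pos] by simp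
  qed
  then show ?thesis using ipg by blast
qed

lemma Top_lap: "norm_laplacian V E f v = f v - Top V E f v"
  unfolding norm_laplacian_def Top_def Asum_def dg_def by simp

lemma Asum_ind:
  assumes "finite V" "z \<in> V"
  shows "Asum V E (\<lambda>y. if y = z then 1 else 0) x = (if E z x then 1 else 0)"
proof -
  have "Asum V E (\<lambda>y. if y = z then 1 else 0) x = (\<Sum>y\<in>V. if y = z then (if E z x then 1 else 0) else 0)"
    unfolding Asum_alt[OF assms(1)] by (intro sum.cong refl) auto
  also have "\<dots> = (if E z x then 1 else 0)" using assms by simp
  finally show ?thesis .
qed

lemma spec:
  assumes G: "simple_graph V E" and pos: "\<forall>v\<in>V. deg V E v \<ge> 1"
    and p: "ip V E f0 f0 > 0" and q: "Nq V E f0 \<le> c^2 * ip V E f0 f0" and c: "c \<ge> 0"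
  shows "\<exists>\<mu>. laplacian_eigenvalue V E \<mu> \<and> \<bar>1 - \<mu>\<bar> \<le> c"
proof -
  have fin: "finite V" and sym: "\<And>u v. E u v \<Longrightarrow> E v u" using G by (auto simp: simple_graph_def)
  obtain g where ipg: "ip V E g g = 1" and mn: "\<And>\<phi>. Nq V E \<phi> \<ge> Nq V E g * ip V E \<phi> \<phi>"
    using exists_min[OF G pos p] by blast
  define m where "m = Nq V E g"
  have m0: "m \<ge> 0" unfolding m_def by (rule Nq_nonneg[OF pos])
  have "m * ip V E f0 f0 \<le> c^2 * ip V E f0 f0" using mn[of f0] q unfolding m_def by linarith
  then have mc: "m \<le> c^2" using p by simp
  have var: "Bf V E g h = m * ip V E g h" for h
  proof -
    have "(2 * (Bf V E g h - m * ip V E g h)) * t + (Nq V E h - m * ip V E h h) * t^2 \<ge> 0" for t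
      using mn[of "\<lambda>y. g y + t * h y"] unfolding Nq_add ip_add ipg m_def[symmetric]
      by (simp add: algebra_simps)
    from quad_zero[OF this] show ?thesis by simp
  qed
  have TT: "Top V E (Top V E g) z = m * g z" if z: "z \<in> V" for z
  proof -
    let ?h = "\<lambda>y. if y = z then 1 else (0::real)"
    have "Bf V E g ?h = (\<Sum>x\<in>V. if E z x then Top V E g x else 0)"
      unfolding Bf_def Asum_ind[OF fin z] Top_def by (intro sum.cong refl) simp
    also have "\<dots> = Asum V E (Top V E g) z"
      unfolding Asum_alt[OF fin] by (intro sum.cong refl) (auto dest: sym)
    finally have a: "Bf V E g ?h = Asum V E (Top V E g) z" .
    have b: "ip V E g ?h = dg V E z * g z"
      unfolding ip_def using z fin by (simp add: if_distrib cong: if_cong)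
    have "Asum V E (Top V E g) z = m * dg V E z * g z" using var[of ?h] a b by simp
    then show ?thesis unfolding Top_def[of V E "Top V E g"] using dg_pos[OF pos z] by simp
  qed
  define s where "s = sqrt m"
  have ss: "s * s = m" unfolding s_def using m0 by simp
  have s0: "s \<ge> 0" unfolding s_def using m0 by simp
  have sc: "s \<le> c" unfolding s_def using mc c m0 real_sqrt_le_mono[of m "c^2"] by simp
  define h where "h = (\<lambda>x. Top V E g x + s * g x)"
  have Th: "Top V E h z = s * h z" if z: "z \<in> V" for z
  proof -
    have "Top V E h z = Top V E (Top V E g) z + s * Top V E g z"
    proof -
      have "Asum V E h z = Asum V E (Top V E g) z + s * Asum V E g z"
        unfolding h_def using Asum_lin[of V E 1 "Top V E g" s g z] by simp
      then show ?thesis by (simp only: Top_def add_divide_distrib times_divide_eq_right)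
    qed
    also have "\<dots> = s * h z" unfolding TT[OF z] h_def ss[symmetric] by (simp add: algebra_simps)
    finally show ?thesis .
  qed
  show ?thesis
  proof (cases "\<exists>z\<in>V. h z \<noteq> 0")
    case True
    have "laplacian_eigenvalue V E (1 - s)"
      unfolding laplacian_eigenvalue_def Top_lap using True Th by (intro exI[of _ h]) (auto simp: algebra_simps)
    then show ?thesis using s0 sc by (intro exI[of _ "1 - s"]) simp
  next
    case False
    have gnz: "\<exists>z\<in>V. g z \<noteq> 0"
    proof (rule ccontr)
      assume "\<not> ?thesis"
      then have "ip V E g g = 0" unfolding ip_def by simp
      then show False using ipg by simp
    qed
    have "Top V E g z = - s * g z" if "z \<in> V" for z using False that unfolding h_def by (auto simp: algebra_simps add_eq_0_iff2)
    then have "laplacian_eigenvalue V E (1 + s)"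
      unfolding laplacian_eigenvalue_def Top_lap using gnz by (intro exI[of _ g]) (auto simp: algebra_simps)
    then show ?thesis using s0 sc by (intro exI[of _ "1 + s"]) simp
  qed
qed

definition fsc :: "real \<Rightarrow> ('a \<Rightarrow> real) \<Rightarrow> ('a \<Rightarrow> real)" where
  "fsc c f = (\<lambda>x. c * f x)"

lemma vs_fsc: "vector_space fsc"
  by unfold_locales (auto simp: fsc_def fun_eq_iff algebra_simps)

lemma sum_fun_apply: "sum \<phi> t x = (\<Sum>v\<in>t. \<phi> v x)"
proof (cases "finite t")
  case True then show ?thesis by (induction t rule: finite_induct) auto
qed simp

lemma ip_Top: "ip V E (Top V E f) g = (\<Sum>x\<in>V. Asum V E f x * g x)"
  if "\<forall>v\<in>V. deg V E v \<ge> 1"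
  unfolding ip_def Top_def using dg_pos[OF that] by (intro sum.cong refl) force

lemma ip_sym: "ip V E f g = ip V E g f" unfolding ip_def by (simp add: algebra_simps)

lemma ip_pos: assumes "finite V" "\<forall>v\<in>V. deg V E v \<ge> 1" "z \<in> V" "f z \<noteq> 0"
  shows "ip V E f f > 0"
  unfolding ip_def
proof (rule sum_pos2[OF assms(1,3)])
  show "0 < dg V E z * f z * f z"
  proof -
    have "0 < f z * f z" using assms(4) by (metis not_real_square_gt_zero)
    then show ?thesis using dg_pos[OF assms(2,3)] by (simp add: mult.assoc)
  qed
  fix i assume "i \<in> V" then have "dg V E i \<ge> 0" using dg_pos[OF assms(2)] by force
  then show "0 \<le> dg V E i * f i * f i" by (simp add: mult.assoc)
qed

lemma eig_finite:
  assumes G: "simple_graph V E" and pos: "\<forall>v\<in>V. deg V E v \<ge> 1"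
  shows "finite {\<mu>. laplacian_eigenvalue V E \<mu>}"
proof -
  have fin: "finite V" using G by (simp add: simple_graph_def)
  interpret fv: vector_space fsc by (rule vs_fsc)
  define Eig where "Eig = {\<mu>. laplacian_eigenvalue V E \<mu>}"
  define ef where "ef = (\<lambda>\<mu>. let f = (SOME f. (\<exists>v\<in>V. f v \<noteq> 0) \<and> (\<forall>v\<in>V. norm_laplacian V E f v = \<mu> * f v))
     in (\<lambda>x. if x \<in> V then f x else 0))"
  have efp: "(\<exists>v\<in>V. ef \<mu> v \<noteq> 0) \<and> (\<forall>v\<in>V. Top V E (ef \<mu>) v = (1 - \<mu>) * ef \<mu> v) \<and> (\<forall>x. x \<notin> V \<longrightarrow> ef \<mu> x = 0)"
    if "\<mu> \<in> Eig" for \<mu>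
  proof -
    let ?f = "SOME f. (\<exists>v\<in>V. f v \<noteq> 0) \<and> (\<forall>v\<in>V. norm_laplacian V E f v = \<mu> * f v)"
    have f: "(\<exists>v\<in>V. ?f v \<noteq> 0) \<and> (\<forall>v\<in>V. norm_laplacian V E ?f v = \<mu> * ?f v)"
    proof -
      have "\<exists>f. (\<exists>v\<in>V. f v \<noteq> 0) \<and> (\<forall>v\<in>V. norm_laplacian V E f v = \<mu> * f v)"
        using that unfolding Eig_def laplacian_eigenvalue_def by simp
      then show ?thesis by (rule someI_ex)
    qed
    have e: "ef \<mu> = (\<lambda>x. if x \<in> V then ?f x else 0)" unfolding ef_def Let_def ..
    have T: "Top V E (ef \<mu>) v = Top V E ?f v" for v
unfolding Top_def e by (subst Asum_cong[of V _ ?f]) auto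
    show ?thesis using f unfolding T unfolding e Top_lap by (auto simp: algebra_simps)
  qed
  have orth: "ip V E (ef \<mu>) (ef \<nu>) = 0" if "\<mu> \<in> Eig" "\<nu> \<in> Eig" "\<mu> \<noteq> \<nu>" for \<mu> \<nu>
  proof -
    have "ip V E (Top V E (ef \<mu>)) (ef \<nu>) = (1 - \<mu>) * ip V E (ef \<mu>) (ef \<nu>)"
      unfolding ip_def sum_distrib_left
    proof (intro sum.cong refl)
      fix x assume x: "x \<in> V"
      have t: "Top V E (ef \<mu>) x = (1 - \<mu>) * ef \<mu> x" using efp[OF that(1)] x by blast
      show "dg V E x * Top V E (ef \<mu>) x * ef \<nu> x = (1 - \<mu>) * (dg V E x * ef \<mu> x * ef \<nu> x)"
        unfolding t by (simp add: algebra_simps)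
    qed
    moreover have "ip V E (Top V E (ef \<mu>)) (ef \<nu>) = ip V E (Top V E (ef \<nu>)) (ef \<mu>)"
    proof -
      have "ip V E (Top V E (ef \<mu>)) (ef \<nu>) = (\<Sum>x\<in>V. Asum V E (ef \<mu>) x * ef \<nu> x)" by (rule ip_Top[OF pos])
      also have "\<dots> = (\<Sum>x\<in>V. ef \<mu> x * Asum V E (ef \<nu>) x)" by (rule selfadj[OF G])
      also have "\<dots> = (\<Sum>x\<in>V. Asum V E (ef \<nu>) x * ef \<mu> x)" by (simp only: mult.commute)
      also have "\<dots> = ip V E (Top V E (ef \<nu>)) (ef \<mu>)" by (rule ip_Top[OF pos, symmetric])
      finally show ?thesis .
    qed
    moreover have "ip V E (Top V E (ef \<nu>)) (ef \<mu>) = (1 - \<nu>) * ip V E (ef \<nu>) (ef \<mu>)"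
      unfolding ip_def sum_distrib_left
    proof (intro sum.cong refl)
      fix x assume x: "x \<in> V"
      have t: "Top V E (ef \<nu>) x = (1 - \<nu>) * ef \<nu> x" using efp[OF that(2)] x by blast
      show "dg V E x * Top V E (ef \<nu>) x * ef \<mu> x = (1 - \<nu>) * (dg V E x * ef \<nu> x * ef \<mu> x)"
        unfolding t by (simp add: algebra_simps)
    qed
    ultimately have "(1 - \<mu>) * ip V E (ef \<mu>) (ef \<nu>) = (1 - \<nu>) * ip V E (ef \<mu>) (ef \<nu>)"
      using ip_sym[of V E "ef \<mu>" "ef \<nu>"] by auto
    then have "(\<nu> - \<mu>) * ip V E (ef \<mu>) (ef \<nu>) = 0" by (simp add: algebra_simps)
    then show ?thesis using that(3) by simp
  qed
  have ipp: "ip V E (ef \<mu>) (ef \<mu>) > 0" if m: "\<mu> \<in> Eig" for \<mu>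
  proof -
    obtain v where "v \<in> V" "ef \<mu> v \<noteq> 0" using efp[OF m] by blast
    then show ?thesis using ip_pos[OF fin pos] by blast
  qed
  have inj: "inj_on ef Eig"
  proof (rule inj_onI)
    fix \<mu> \<nu> assume a: "\<mu> \<in> Eig" "\<nu> \<in> Eig" "ef \<mu> = ef \<nu>"
    show "\<mu> = \<nu>"
    proof (rule ccontr)
      assume "\<mu> \<noteq> \<nu>" then have "ip V E (ef \<mu>) (ef \<nu>) = 0" using orth a by blast
      then show False using ipp[OF a(1)] a(3) by simp
    qed
  qed
  define B where "B = (\<lambda>z. (\<lambda>y. if y = z then 1 else (0::real))) ` V"
  have indep: "fv.independent (ef ` Eig)"
  proof
    assume "fv.dependent (ef ` Eig)"
    then obtain t u w where t: "finite t" "t \<subseteq> ef ` Eig" "(\<Sum>v\<in>t. fsc (u v) v) = 0"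
      and w: "w \<in> t" "u w \<noteq> 0"
      unfolding fv.dependent_explicit by blast
    have "(\<Sum>x\<in>V. dg V E x * (\<Sum>v\<in>t. fsc (u v) v) x * w x) = 0" using t(3) by simp
    moreover have "(\<Sum>x\<in>V. dg V E x * (\<Sum>v\<in>t. fsc (u v) v) x * w x) = (\<Sum>v\<in>t. u v * ip V E v w)"
    proof -
      have "(\<Sum>x\<in>V. dg V E x * (\<Sum>v\<in>t. fsc (u v) v) x * w x)
          = (\<Sum>x\<in>V. \<Sum>v\<in>t. u v * (dg V E x * v x * w x))"
        unfolding sum_fun_apply fsc_def sum_distrib_left sum_distrib_right
        by (intro sum.cong refl) (simp add: algebra_simps)
      also have "\<dots> = (\<Sum>v\<in>t. \<Sum>x\<in>V. u v * (dg V E x * v x * w x))" by (rule sum.swap)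
      also have "\<dots> = (\<Sum>v\<in>t. u v * ip V E v w)" unfolding ip_def sum_distrib_left ..
      finally show ?thesis .
    qed
    moreover have "(\<Sum>v\<in>t. u v * ip V E v w) = (\<Sum>v\<in>t. if v = w then u w * ip V E w w else 0)"
    proof (intro sum.cong refl)
      fix v assume v: "v \<in> t"
      show "u v * ip V E v w = (if v = w then u w * ip V E w w else 0)"
      proof (cases "v = w")
        case False
        obtain \<mu> \<nu> where "\<mu> \<in> Eig" "\<nu> \<in> Eig" "v = ef \<mu>" "w = ef \<nu>" using v w(1) t(2) by blast
        moreover have "\<mu> \<noteq> \<nu>" using False calculation by auto
        ultimately show ?thesis using False orth[of \<mu> \<nu>] by simp
      qed simp
    qed
    moreover have "\<dots> = u w * ip V E w w" using w(1) t(1) by simp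
    moreover have "ip V E w w > 0" using w(1) t(2) ipp by blast
    ultimately show False using w(2) by simp
  qed
  have sp: "ef ` Eig \<subseteq> fv.span B"
  proof
    fix f assume "f \<in> ef ` Eig"
    then obtain \<mu> where m: "\<mu> \<in> Eig" "f = ef \<mu>" by blast
    have "f = (\<Sum>z\<in>V. fsc (f z) (\<lambda>y. if y = z then 1 else 0))"
    proof
      fix x
      have "(\<Sum>z\<in>V. fsc (f z) (\<lambda>y. if y = z then 1 else 0)) x = (\<Sum>z\<in>V. if x = z then f z else 0)"
        unfolding sum_fun_apply fsc_def by (intro sum.cong refl) simp
      also have "\<dots> = f x" using fin efp[OF m(1)] m(2) by auto
      finally show "f x = (\<Sum>z\<in>V. fsc (f z) (\<lambda>y. if y = z then 1 else 0)) x" by simp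
    qed
    also have "\<dots> \<in> fv.span B"
      unfolding B_def
    proof (rule fv.span_sum)
      fix z assume z: "z \<in> V"
      show "fsc (f z) (\<lambda>y. if y = z then 1 else 0) \<in> fv.span ((\<lambda>z. (\<lambda>y. if y = z then 1 else (0::real))) ` V)"
        by (rule fv.span_scale, rule fv.span_base) (use z in blast)
    qed
    finally show "f \<in> fv.span B" .
  qed
  have fB: "finite B" unfolding B_def using fin by simp
  have "finite (ef ` Eig)" using fv.independent_span_bound[OF fB indep sp] by simp
  then show ?thesis using finite_imageD[OF _ inj] unfolding Eig_def by simp
qed

lemma eps_le:
  assumes G: "simple_graph V E" and pos: "\<forall>v\<in>V. deg V E v \<ge> 1"
    and p: "ip V E f f > 0" and q: "4 * Nq V E f \<le> ip V E f f"
  shows "spectral_eps V E \<le> 1/2"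
proof -
  obtain \<mu> where m: "laplacian_eigenvalue V E \<mu>" "\<bar>1 - \<mu>\<bar> \<le> 1/2"
    using spec[OF G pos p _, of "1/2"] q by (auto simp: power2_eq_square)
  have eq: "{\<bar>1 - mu\<bar> | mu. laplacian_eigenvalue V E mu} = (\<lambda>mu. \<bar>1 - mu\<bar>) ` {mu. laplacian_eigenvalue V E mu}"
    by auto
  have fin: "finite {\<bar>1 - mu\<bar> | mu. laplacian_eigenvalue V E mu}"
    unfolding eq using eig_finite[OF G pos] by simp
  have "spectral_eps V E \<le> \<bar>1 - \<mu>\<bar>" unfolding spectral_eps_def
    by (rule Min_le[OF fin]) (use m in blast)
  then show ?thesis using m by simp
qed

lemma Asum_supp:
  assumes "finite V" "P \<subseteq> V" "\<And>y. y \<notin> P \<Longrightarrow> f y = 0"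
  shows "Asum V E f x = (\<Sum>p\<in>P. if E p x then f p else 0)"
  unfolding Asum_alt[OF assms(1)] using assms
  by (intro sum.mono_neutral_right) auto

lemma Nq_supp:
  assumes "finite V" "S \<subseteq> V" "\<And>x. x \<in> V \<Longrightarrow> x \<notin> S \<Longrightarrow> Asum V E f x = 0"
  shows "Nq V E f = (\<Sum>x\<in>S. (Asum V E f x)^2 / dg V E x)"
  unfolding Nq_def using assms by (intro sum.mono_neutral_right) auto

lemma ip_supp:
  assumes "finite V" "S \<subseteq> V" "\<And>x. x \<notin> S \<Longrightarrow> f x = 0"
  shows "ip V E f f = (\<Sum>x\<in>S. dg V E x * f x * f x)"
  unfolding ip_def using assms by (intro sum.mono_neutral_right) auto

lemma nb_iff:
  assumes G: "simple_graph V E" and N: "neighbours V E u = S"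
  shows "E u x = (x \<in> S)" "E x u = (x \<in> S)"
proof -
  have "E x u = (x \<in> neighbours V E u)" using G unfolding neighbours_def simple_graph_def by auto
  then show "E x u = (x \<in> S)" using N by simp
  moreover have "E u x = E x u" using G unfolding simple_graph_def by blast
  ultimately show "E u x = (x \<in> S)" by simp
qed

lemma nb_mem: "simple_graph V E \<Longrightarrow> E u v \<Longrightarrow> v \<in> neighbours V E u"
  unfolding simple_graph_def neighbours_def by auto

lemma deg1:
  assumes G: "simple_graph V E" and d: "deg V E u = 1" and e: "E u v"
  shows "neighbours V E u = {v}"
  using d nb_mem[OF G e] unfolding deg_def by (metis card_1_singletonE singletonD)

lemma deg2:
  assumes G: "simple_graph V E" and d: "deg V E u = 2" and e: "E u v"
  obtains a where "a \<noteq> v" "neighbours V E u = {v, a}"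
proof -
  obtain x y where xy: "neighbours V E u = {x, y}" "x \<noteq> y"
    using d unfolding deg_def by (meson card_2_iff)
  have "v \<in> {x, y}" using nb_mem[OF G e] xy by simp
  then show ?thesis using that xy by (metis insert_commute insertE singletonD)
qed

lemma deg2':
  assumes G: "simple_graph V E" and d: "deg V E u = 2" and e: "E u v" "E u w" "v \<noteq> w"
  shows "neighbours V E u = {v, w}"
proof -
  obtain a where a: "a \<noteq> v" "neighbours V E u = {v, a}" using deg2[OF G d e(1)] by blast
  have "w \<in> {v, a}" using nb_mem[OF G e(2)] a by simp
  then show ?thesis using a e(3) by auto
qed

lemma deg_ge2:
  assumes G: "simple_graph V E" and e: "E u v" "E u w" "v \<noteq> w"
  shows "deg V E u \<ge> 2"
proof -
  have fin: "finite (neighbours V E u)" using G nb_fin by (auto simp: simple_graph_def)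
  have "{v, w} \<subseteq> neighbours V E u" using nb_mem[OF G e(1)] nb_mem[OF G e(2)] by simp
  then have "card {v, w} \<le> deg V E u" unfolding deg_def using card_mono[OF fin] by blast
  then show ?thesis using e(3) by simp
qed

lemma inV: "simple_graph V E \<Longrightarrow> E u v \<Longrightarrow> u \<in> V \<and> v \<in> V"
  unfolding simple_graph_def by blast

lemma symE: "simple_graph V E \<Longrightarrow> E u v \<Longrightarrow> E v u"
  unfolding simple_graph_def by blast

lemma irr: "simple_graph V E \<Longrightarrow> \<not> E u u"
  unfolding simple_graph_def by blast

lemma case1:
  assumes G: "simple_graph V E"
    and H: "\<And>f. ip V E f f > 0 \<Longrightarrow> 4 * Nq V E f \<le> ip V E f f \<Longrightarrow> False"
    and d: "u \<noteq> w" "deg V E u = 1" "deg V E w = 1" and e: "E u v" "E v w"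
  shows False
proof -
  have fin: "finite V" using G by (simp add: simple_graph_def)
  have V: "u \<in> V" "v \<in> V" "w \<in> V" using inV[OF G e(1)] inV[OF G e(2)] by auto
  have Nu: "neighbours V E u = {v}" using deg1[OF G d(2) e(1)] .
  have Nw: "neighbours V E w = {v}" using deg1[OF G d(3) symE[OF G e(2)]] .
  define f where "f = (\<lambda>y. if y = u then 1 else if y = w then -1 else (0::real))"
  have A: "Asum V E f x = 0" for x
  proof -
    have "Asum V E f x = (\<Sum>p\<in>{u,w}. if E p x then f p else 0)"
      by (rule Asum_supp) (auto simp: f_def fin V)
    then show ?thesis using d(1) by (simp add: f_def nb_iff[OF G Nu] nb_iff[OF G Nw])
  qed
  have N: "Nq V E f = 0" unfolding Nq_def A by simp
  have I: "ip V E f f = 2"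
  proof -
    have "ip V E f f = (\<Sum>x\<in>{u,w}. dg V E x * f x * f x)"
      by (rule ip_supp) (auto simp: f_def fin V)
    then show ?thesis using d by (simp add: f_def dg_def)
  qed
  show False using H[of f] N I by simp
qed

lemma chain:
  assumes G: "simple_graph V E"
    and H: "\<And>f. ip V E f f > 0 \<Longrightarrow> 4 * Nq V E f \<le> ip V E f f \<Longrightarrow> False"
    and dist: "a \<noteq> u" "a \<noteq> v" "a \<noteq> w" "u \<noteq> v" "u \<noteq> w" "v \<noteq> w"
    and d: "deg V E a = 1" "deg V E u = 2" "deg V E v = 2"
    and e: "E a u" "E u v" "E v w"
  shows False
proof -
  have fin: "finite V" using G by (simp add: simple_graph_def)
  have V: "a \<in> V" "u \<in> V" "v \<in> V" "w \<in> V" using inV[OF G e(1)] inV[OF G e(2)] inV[OF G e(3)] by auto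
  have Na: "neighbours V E a = {u}" using deg1[OF G d(1) e(1)] .
  have Nu: "neighbours V E u = {a, v}" using deg2'[OF G d(2) symE[OF G e(1)] e(2) dist(2)] .
  have Nv: "neighbours V E v = {u, w}" using deg2'[OF G d(3) symE[OF G e(2)] e(3) dist(5)] .
  have dw: "deg V E w \<ge> 1"
  proof -
    have fw: "finite (neighbours V E w)" using nb_fin[OF fin] .
    have "v \<in> neighbours V E w" using nb_mem[OF G symE[OF G e(3)]] .
    then show ?thesis unfolding deg_def using fw by (metis One_nat_def Suc_leI card_gt_0_iff empty_iff)
  qed
  show False
  proof (cases "deg V E w = 1")
    case False
    then have dw2: "deg V E w \<ge> 2" using dw by simp
    define f where "f = (\<lambda>y. if y = a then 1 else if y = v then -1 else (0::real))"
    have A: "Asum V E f x = (if x = w then -1 else 0)" for x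
    proof -
      have "Asum V E f x = (\<Sum>p\<in>{a,v}. if E p x then f p else 0)"
        by (rule Asum_supp) (auto simp: f_def fin V)
      then show ?thesis using dist by (simp add: f_def nb_iff[OF G Na] nb_iff[OF G Nv])
    qed
    have N: "Nq V E f = 1 / dg V E w"
    proof -
      have "Nq V E f = (\<Sum>x\<in>{w}. (Asum V E f x)^2 / dg V E x)"
        by (rule Nq_supp) (auto simp: A fin V)
      then show ?thesis by (simp add: A)
    qed
    have I: "ip V E f f = 3"
    proof -
      have "ip V E f f = (\<Sum>x\<in>{a,v}. dg V E x * f x * f x)"
        by (rule ip_supp) (auto simp: f_def fin V)
      then show ?thesis using dist d by (simp add: f_def dg_def)
    qed
    have "dg V E w \<ge> 2" using dw2 by (simp add: dg_def)
    then have "1 / dg V E w \<le> 1/2" by (simp add: divide_le_eq)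
    then show False using H[of f] N I by simp
  next
    case True
    have Nw: "neighbours V E w = {v}" using deg1[OF G True symE[OF G e(3)]] .
    define f where "f = (\<lambda>y. if y = a then 2 else if y = u then 1 else if y = v then -1
      else if y = w then -2 else (0::real))"
    have A: "Asum V E f x = (if x = a \<or> x = u then 1 else if x = v \<or> x = w then -1 else 0)" for x
    proof -
      have "Asum V E f x = (\<Sum>p\<in>{a,u,v,w}. if E p x then f p else 0)"
        by (rule Asum_supp) (auto simp: f_def fin V)
      then show ?thesis using dist
        by (simp add: f_def nb_iff[OF G Na] nb_iff[OF G Nu] nb_iff[OF G Nv] nb_iff[OF G Nw])
    qed
    have N: "Nq V E f = 3"
    proof -
      have "Nq V E f = (\<Sum>x\<in>{a,u,v,w}. (Asum V E f x)^2 / dg V E x)"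
        by (rule Nq_supp) (auto simp: A fin V)
      then show ?thesis using dist d True by (simp add: A dg_def)
    qed
    have I: "ip V E f f = 12"
    proof -
      have "ip V E f f = (\<Sum>x\<in>{a,u,v,w}. dg V E x * f x * f x)"
        by (rule ip_supp) (auto simp: f_def fin V)
      then show ?thesis using dist d True by (simp add: f_def dg_def)
    qed
    show False using H[of f] N I by simp
  qed
qed

lemma deg_ge1:
  assumes G: "simple_graph V E" and e: "E x y"
  shows "deg V E x \<ge> 1"
proof -
  have fin: "finite V" using G by (simp add: simple_graph_def)
  have fw: "finite (neighbours V E x)" using nb_fin[OF fin] .
  have "y \<in> neighbours V E x" using nb_mem[OF G e] .
  then show ?thesis unfolding deg_def using fw by (metis One_nat_def Suc_leI card_gt_0_iff empty_iff)
qed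

lemma caseC:
  assumes G: "simple_graph V E"
    and H: "\<And>f. ip V E f f > 0 \<Longrightarrow> 4 * Nq V E f \<le> ip V E f f \<Longrightarrow> False"
    and dist: "u \<noteq> v" "u \<noteq> w" "v \<noteq> w"
    and d: "deg V E u = 1" "deg V E v = 2" "deg V E w = 2"
    and e: "E u v" "E v w"
  shows False
proof -
  obtain b where b: "b \<noteq> v" "neighbours V E w = {v, b}" by (rule deg2[OF G d(3) symE[OF G e(2)]])
  have Nu: "neighbours V E u = {v}" using deg1[OF G d(1) e(1)] .
  have ewb: "E w b" using nb_iff(1)[OF G b(2), of b] by simp
  have bw: "b \<noteq> w" using irr[OF G, of w] ewb by auto
  have bu: "b \<noteq> u"
  proof
    assume "b = u"
    then have "E u w" using symE[OF G ewb] by simp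
    then have "w = v" using nb_iff(1)[OF G Nu, of w] by simp
    then show False using dist(3) by simp
  qed
  show False
    by (rule chain[OF G H dist(1) dist(2) not_sym[OF bu] dist(3) not_sym[OF b(1)] not_sym[OF bw]
        d(1) d(2) d(3) e(1) e(2) ewb])
qed

lemma caseB:
  assumes G: "simple_graph V E"
    and H: "\<And>f. ip V E f f > 0 \<Longrightarrow> 4 * Nq V E f \<le> ip V E f f \<Longrightarrow> False"
    and dist: "u \<noteq> v" "u \<noteq> w" "v \<noteq> w"
    and d: "deg V E u = 2" "deg V E v = 2" "deg V E w = 2"
    and e: "E u v" "E v w"
  shows False
proof -
  have fin: "finite V" using G by (simp add: simple_graph_def)
  have V: "u \<in> V" "v \<in> V" "w \<in> V" using inV[OF G e(1)] inV[OF G e(2)] by auto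
  have Nv: "neighbours V E v = {u, w}" using deg2'[OF G d(2) symE[OF G e(1)] e(2) dist(2)] .
  obtain a where a: "a \<noteq> v" "neighbours V E u = {v, a}" by (rule deg2[OF G d(1) e(1)])
  obtain b where b: "b \<noteq> v" "neighbours V E w = {v, b}" by (rule deg2[OF G d(3) symE[OF G e(2)]])
  have eua: "E u a" using nb_iff(1)[OF G a(2), of a] by simp
  have ewb: "E w b" using nb_iff(1)[OF G b(2), of b] by simp
  have aV: "a \<in> V" using inV[OF G eua] by simp
  have bV: "b \<in> V" using inV[OF G ewb] by simp
  have au: "a \<noteq> u" using irr[OF G, of u] eua by auto
  have bw: "b \<noteq> w" using irr[OF G, of w] ewb by auto
  show False
  proof (cases "a = w")
    case True
    define f where "f = (\<lambda>y. if y = u then 1 else if y = v then -1 else (0::real))"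
    have A: "Asum V E f x = (if x = v then 1 else if x = u then -1 else 0)" for x
    proof -
      have "Asum V E f x = (\<Sum>p\<in>{u,v}. if E p x then f p else 0)"
        by (rule Asum_supp) (auto simp: f_def fin V)
      then show ?thesis using dist True by (simp add: f_def nb_iff[OF G a(2)] nb_iff[OF G Nv])
    qed
    have N: "Nq V E f = 1"
    proof -
      have "Nq V E f = (\<Sum>x\<in>{u,v}. (Asum V E f x)^2 / dg V E x)"
        by (rule Nq_supp) (auto simp: A fin V)
      then show ?thesis using dist d by (simp add: A dg_def)
    qed
    have I: "ip V E f f = 4"
    proof -
      have "ip V E f f = (\<Sum>x\<in>{u,v}. dg V E x * f x * f x)"
        by (rule ip_supp) (auto simp: f_def fin V)
      then show ?thesis using dist d by (simp add: f_def dg_def)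
    qed
    show False using H[of f] N I by simp
  next
    case False
    have bu: "b \<noteq> u"
    proof
      assume "b = u"
      then have "E u w" using symE[OF G ewb] by simp
      then have "w \<in> {v, a}" using nb_iff(1)[OF G a(2), of w] by simp
      then show False using dist(3) False by auto
    qed
    show False
    proof (cases "deg V E a = 1")
      case True
      show False
        by (rule chain[OF G H au a(1) False dist(1) dist(2) dist(3) True d(1) d(2) symE[OF G eua] e(1) e(2)])
    next
      case na: False
      show False
      proof (cases "deg V E b = 1")
        case True
        show False
          by (rule chain[OF G H bw b(1) bu not_sym[OF dist(3)] not_sym[OF dist(2)] not_sym[OF dist(1)]
              True d(3) d(2) symE[OF G ewb] symE[OF G e(2)] symE[OF G e(1)]])
      next
        case nb: False
        have da: "dg V E a \<ge> 2" using na deg_ge1[OF G symE[OF G eua]] by (simp add: dg_def)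
        have db: "dg V E b \<ge> 2" using nb deg_ge1[OF G symE[OF G ewb]] by (simp add: dg_def)
        define f where "f = (\<lambda>y. if y = u then 1 else if y = w then -1 else (0::real))"
        have A: "Asum V E f x = (if x = a \<and> a \<noteq> b then 1 else if x = b \<and> a \<noteq> b then -1 else 0)" for x
        proof -
          have "Asum V E f x = (\<Sum>p\<in>{u,w}. if E p x then f p else 0)"
            by (rule Asum_supp) (auto simp: f_def fin V)
          also have "\<dots> = (if E u x then 1 else 0) + (if E w x then -1 else 0)"
            using dist by (simp add: f_def)
          also have "\<dots> = (if x = v \<or> x = a then 1 else 0) + (if x = v \<or> x = b then -1 else 0)"
            by (simp only: nb_iff(1)[OF G a(2)] nb_iff(1)[OF G b(2)] insert_iff empty_iff simp_thms)
          also have "\<dots> = (if x = a \<and> a \<noteq> b then 1 else if x = b \<and> a \<noteq> b then -1 else 0)"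
            using a(1) b(1) by (cases "x = v"; cases "x = a"; cases "x = b") simp_all
          finally show ?thesis .
        qed
        have I: "ip V E f f = 4"
        proof -
          have "ip V E f f = (\<Sum>x\<in>{u,w}. dg V E x * f x * f x)"
            by (rule ip_supp) (auto simp: f_def fin V)
          then show ?thesis using dist d by (simp add: f_def dg_def)
        qed
        have N: "Nq V E f \<le> 1"
        proof (cases "a = b")
          case True
          then show ?thesis unfolding Nq_def A by simp
        next
          case ab: False
          have "Nq V E f = (\<Sum>x\<in>{a,b}. (Asum V E f x)^2 / dg V E x)"
            by (rule Nq_supp) (auto simp: A fin aV bV)
          also have "\<dots> = 1 / dg V E a + 1 / dg V E b" using ab by (simp add: A)
          also have "\<dots> \<le> 1/2 + 1/2"
            using da db by (intro add_mono) (simp_all add: divide_le_eq)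
          finally show ?thesis by simp
        qed
        show False using H[of f] N I by simp
      qed
    qed
  qed
qed

lemma parts:
  assumes G: "simple_graph V E"
    and H: "\<And>f. ip V E f f > 0 \<Longrightarrow> 4 * Nq V E f \<le> ip V E f f \<Longrightarrow> False"
  shows "(\<forall>u\<in>V. \<forall>w\<in>V. u \<noteq> w \<and> deg V E u = 1 \<and> deg V E w = 1
            \<longrightarrow> \<not> (\<exists>v\<in>V. E u v \<and> E v w))
       \<and> \<not> (\<exists>u\<in>V. \<exists>v\<in>V. \<exists>w\<in>V. u \<noteq> v \<and> v \<noteq> w \<and> u \<noteq> w \<and> E u v \<and> E v w
            \<and> deg V E u \<in> {1,2} \<and> deg V E v \<in> {1,2} \<and> deg V E w \<in> {1,2})"
proof -
  have P1: "\<forall>u\<in>V. \<forall>w\<in>V. u \<noteq> w \<and> deg V E u = 1 \<and> deg V E w = 1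
            \<longrightarrow> \<not> (\<exists>v\<in>V. E u v \<and> E v w)"
  proof (intro ballI impI notI)
    fix u w assume "u \<in> V" "w \<in> V" and d: "u \<noteq> w \<and> deg V E u = 1 \<and> deg V E w = 1"
      and "\<exists>v\<in>V. E u v \<and> E v w"
    then obtain v where e: "E u v" "E v w" by blast
    from d have d': "u \<noteq> w" "deg V E u = 1" "deg V E w = 1" by auto
    show False by (rule case1[OF G H d' e])
  qed
  have P2: "\<not> (\<exists>u\<in>V. \<exists>v\<in>V. \<exists>w\<in>V. u \<noteq> v \<and> v \<noteq> w \<and> u \<noteq> w \<and> E u v \<and> E v w
            \<and> deg V E u \<in> {1,2} \<and> deg V E v \<in> {1,2} \<and> deg V E w \<in> {1,2})"
  proof
    assume "\<exists>u\<in>V. \<exists>v\<in>V. \<exists>w\<in>V. u \<noteq> v \<and> v \<noteq> w \<and> u \<noteq> w \<and> E u v \<and> E v w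
            \<and> deg V E u \<in> {1,2} \<and> deg V E v \<in> {1,2} \<and> deg V E w \<in> {1,2}"
    then obtain u v w where dist: "u \<noteq> v" "v \<noteq> w" "u \<noteq> w" and e: "E u v" "E v w"
      and du: "deg V E u \<in> {1,2}" and dv: "deg V E v \<in> {1,2}" and dw: "deg V E w \<in> {1,2}"
      by blast
    have "deg V E v \<ge> 2" using deg_ge2[OF G symE[OF G e(1)] e(2) dist(3)] .
    then have dv2: "deg V E v = 2" using dv by auto
    show False
    proof (cases "deg V E u = 1")
      case u1: True
      show False
      proof (cases "deg V E w = 1")
        case True
        show False by (rule case1[OF G H dist(3) u1 True e])
      next
        case False
        then have dw2: "deg V E w = 2" using dw by auto
        show False by (rule caseC[OF G H dist(1) dist(3) dist(2) u1 dv2 dw2 e])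
      qed
    next
      case u2: False
      then have u2: "deg V E u = 2" using du by auto
      show False
      proof (cases "deg V E w = 1")
        case True
        show False by (rule caseC[OF G H not_sym[OF dist(2)] not_sym[OF dist(3)] not_sym[OF dist(1)]
            True dv2 u2 symE[OF G e(2)] symE[OF G e(1)]])
      next
        case False
        then have dw2: "deg V E w = 2" using dw by auto
        show False by (rule caseB[OF G H dist(1) dist(3) dist(2) u2 dv2 dw2 e])
      qed
    qed
  qed
  show ?thesis using P1 P2 by blast
qed

theorem mainTheorem16:
  fixes V :: "'a set" and E :: "'a \<Rightarrow> 'a \<Rightarrow> bool"
  assumes "simple_graph V E"
    and "connected_graph V E"
    and "card V \<ge> 3"
    and "spectral_eps V E > 1/2"
  shows "(\<forall>u\<in>V. \<forall>w\<in>V. u \<noteq> w \<and> deg V E u = 1 \<and> deg V E w = 1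
            \<longrightarrow> \<not> (\<exists>v\<in>V. E u v \<and> E v w))
       \<and> \<not> (\<exists>u\<in>V. \<exists>v\<in>V. \<exists>w\<in>V. u \<noteq> v \<and> v \<noteq> w \<and> u \<noteq> w \<and> E u v \<and> E v w
            \<and> deg V E u \<in> {1,2} \<and> deg V E v \<in> {1,2} \<and> deg V E w \<in> {1,2})"
proof -
  note G = assms(1)
  have fin: "finite V" using G by (simp add: simple_graph_def)
  have pos: "\<forall>v\<in>V. deg V E v \<ge> 1"
  proof
    fix v assume v: "v \<in> V"
    have "card (V - {v}) \<ge> 2" using assms(3) v fin by simp
    then have "V - {v} \<noteq> {}" by (metis card.empty not_numeral_le_zero)
    then obtain u where u: "u \<in> V" "u \<noteq> v" by blast
    have r: "E\<^sup>*\<^sup>* v u" using assms(2) v u(1) unfolding connected_graph_def by simp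
    obtain y where "E v y"
    proof (rule converse_rtranclpE[OF r])
      assume "v = u" then show thesis using u(2) by simp
    next
      fix y assume "E v y" "E\<^sup>*\<^sup>* y u" then show thesis using that by simp
    qed
    then show "deg V E v \<ge> 1" by (rule deg_ge1[OF G])
  qed
  show ?thesis
  proof (rule parts[OF G])
    fix f assume "ip V E f f > 0" "4 * Nq V E f \<le> ip V E f f"
    then have "spectral_eps V E \<le> 1/2" by (rule eps_le[OF G pos])
    then show False using assms(4) by simp
  qed
qed

end
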